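(* Suppose Assumptions 1, 2 and 3 hold, let $\Sigma=\Sigma_{\mathcal U}+\Sigma_{\mathcal V}+\Sigma_{\mathcal W}1_21_2^\top=\begin{pmatrix}\Sigma_{1,1}&\Sigma_{1,2}\\\Sigma_{1,2}&\Sigma_{2,2}\end{pmatrix}$ be the asymptotic covariance matrix of $\sqrt n(\hat\tau^{adj}-\tau,\hat\tau^{unadj}-\tau)^\top$ given below, assume $\Sigma_{1,1}-2\Sigma_{1,2}+\Sigma_{2,2}>0$, and let $\hat\Sigma=\begin{pmatrix}\hat\Sigma_{1,1}&\hat\Sigma_{1,2}\\\hat\Sigma_{1,2}&\hat\Sigma_{2,2}\end{pmatrix}$ be any estimator with $\hat\Sigma\to_p\Sigma$. Define $\hat w=\frac{\hat\Sigma_{2,2}-\hat\Sigma_{1,2}}{\hat\Sigma_{1,1}+\hat\Sigma_{2,2}-2\hat\Sigma_{1,2}}$ and $\hat\tau^*=\hat w\hat\tau^{adj}+(1-\hat w)\hat\tau^{unadj}$. Then $$\sqrt n\big[(\hat w,1-\hat w)\hat\Sigma(\hat w,1-\hat w)^\top\big]^{-1/2}(\hat\tau^*-\tau)\rightsquigarrow\mathcal N(0,1),$$ and the asymptotic variance of $\sqrt n(\hat\tau^*-\tau)$, namely $\min_{w\in\mathbb R}(w,1-w)\Sigma(w,1-w)^\top$, is no larger than the asymptotic variances $\Sigma_{1,1}$ of $\sqrt n(\hat\tau^{adj}-\tau)$ and $\Sigma_{2,2}$ of $\sqrt n(\hat\tau^{unadj}-\tau)$.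
   Context: Setup. Units $i\in[n]$ have potential outcomes $Y_i(1),Y_i(0)$, stratum $S_i\in\mathcal S$ (fixed finite set), covariates $X_i\in\mathbb R^{k_n}$, treatment $A_i\in\{0,1\}$, observed $Y_i=A_iY_i(1)+(1-A_i)Y_i(0)$. $n_s=\sum_i1\{S_i=s\}$, $n_{1,s}=\sum_iA_i1\{S_i=s\}$, $n_{0,s}=n_s-n_{1,s}$, $\aleph_{a,s}=\{i:A_i=a,S_i=s\}$, $\aleph_s=\aleph_{1,s}\cup\aleph_{0,s}$, $\hat p_s=n_s/n$; $\tau=E[Y(1)-Y(0)]$. Assumption 1. (i) $\{(Y_i(1),Y_i(0),S_i,X_i)\}_{i\in[n]}$ i.i.d.; (ii) $\{Y_i(1),Y_i(0),X_i\}_i$ independent of $\{A_i\}_i$ given $\{S_i\}_i$; (iii) $p_s=P(S_i=s)>0$ fixed in $n$; (iv) target fractions $\pi_s$ with $c<\min_s\pi_s\le\max_s\pi_s<1-c$, $c\in(0,1/2)$, and $\sum_i(A_i-\pi_s)1\{S_i=s\}/n_s=o_P(1)$. Estimators: $\hat\tau^{unadj}=\sum_s\hat p_s(\frac1{n_{1,s}}\sum_{i\in\aleph_{1,s}}Y_i-\frac1{n_{0,s}}\sum_{i\in\aleph_{0,s}}Y_i)$; with $\bar X_s=n_s^{-1}\sum_{i\in\aleph_s}X_i$, $\breve X_i=X_i-\bar X_{S_i}$, $(\hat\tau_{a,s},\hat\beta_{a,s})$ the intercept and slope of OLS of $Y_i$ on $(1,\breve X_i)$ over $i\in\aleph_{a,s}$,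 and $\hat\tau^{adj}=\sum_s\hat p_s(\hat\tau_{1,s}-\hat\tau_{0,s})$. $\breve X_{\aleph_{a,s}}$: $n_{a,s}\times k_n$ matrix of rows $\breve X_i^\top$, $i\in\aleph_{a,s}$; $P_{a,s}=\breve X_{\aleph_{a,s}}(\breve X_{\aleph_{a,s}}^\top\breve X_{\aleph_{a,s}})^{-1}\breve X_{\aleph_{a,s}}^\top$, $M_{a,s}=I-P_{a,s}$ (entries $P_{a,s,i,j},M_{a,s,i,j}$). $\varepsilon_i(a)=Y_i(a)-E(Y_i(a)|X_i,S_i)$; $\gamma_{a,s,n}=1^\top M_{a,s}1/n_{a,s}$; $\sigma^2_{a,s,n}=\frac1{n_{a,s}}\sum_{i\in\aleph_{a,s}}(\sum_jM_{a,s,i,j})^2E(\varepsilon_i^2(a)|X_i,S_i=s)$; $\rho_{a,s,n}=\frac1{n_{a,s}}\sum_{i\in\aleph_{a,s}}(\sum_jM_{a,s,i,j})E(\varepsilon_i^2(a)|X_i,S_i=s)$. Assumption 2. (i) $\max_iE[\varepsilon_i^4(a)|X_i,S_i]=O_P(1)$; (ii) $\min_{a,s,i}E[\varepsilon_i^2(a)|X_i,S_i=s]\ge b>0$; (iii) $k_n/n_{a,s}\to\kappa_{a,s}\in[0,1)$, $\limsup_n\max_{a,s,i}P_{a,s,i,i}\le1-\delta$ a.s., $\delta\in(0,1)$; (iv) $E(Y_i(a)|X_i,S_i=s)=\alpha_{a,s}+X_i^\top\beta_{a,s}+e_{i,s}(a)$, $E(e^2_{i,s}(a)|S_i=s)=o(n^{-1})$;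 (v) $\max_{a,s}\max_{i\in\aleph_{a,s}}|\sum_{j\in\aleph_{a,s}}M_{a,s,i,j}|=o_P(n^{1/2})$. Assumption 3. $\gamma_{a,s,n}\to_p\gamma_{a,s,\infty}>0$, $\gamma_{a,s,n}^{-2}\sigma^2_{a,s,n}\to_p\omega^2_{a,s,\infty}>0$, $\gamma_{a,s,n}^{-1}\rho_{a,s,n}\to_p\varpi_{a,s,\infty}$ (deterministic limits). The matrix $\Sigma$: with $\phi_i(a)=E(Y_i(a)|X_i,S_i)-E(Y_i(a)|S_i)$, $\Sigma_{1,1}=E\big(\frac{\omega^2_{1,S_i,\infty}}{\pi_{S_i}}+\frac{\omega^2_{0,S_i,\infty}}{1-\pi_{S_i}}\big)+E\,\mathrm{var}(\phi_i(1)-\phi_i(0)|S_i)+\Sigma_{\mathcal W}$, $\Sigma_{1,2}=E\big(\frac{\varpi_{1,S_i,\infty}}{\pi_{S_i}}+\frac{\varpi_{0,S_i,\infty}}{1-\pi_{S_i}}\big)+E\,\mathrm{var}(\phi_i(1)-\phi_i(0)|S_i)+\Sigma_{\mathcal W}$, $\Sigma_{2,2}=E\big(\frac{E(\varepsilon_i^2(1)|S_i)}{\pi_{S_i}}+\frac{E(\varepsilon_i^2(0)|S_i)}{1-\pi_{S_i}}\big)+E\big[\frac{\mathrm{var}(\phi_i(1)|S_i)}{\pi_{S_i}}+\frac{\mathrm{var}(\phi_i(0)|S_i)}{1-\pi_{S_i}}\big]+\Sigma_{\mathcal W}$, where $\Sigma_{\mathcal W}=\mathrm{var}(E(Y_i(1)-Y_i(0)|S_i))$.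 (Under Assumptions 1–3, $\sqrt n(\hat\tau^{adj}-\tau,\hat\tau^{unadj}-\tau)^\top\rightsquigarrow\mathcal N(0,\Sigma)$.) *)

theory Defs
  imports "HOL-Probability.Probability"
begin

definition conv_in_prob :: "(nat \<Rightarrow> 'a measure) \<Rightarrow> (nat \<Rightarrow> 'a \<Rightarrow> real) \<Rightarrow> real \<Rightarrow> bool" where
  "conv_in_prob M X c \<longleftrightarrow>
     (\<forall>e>0. (\<lambda>n. measure (M n) {x \<in> space (M n). e < \<bar>X n x - c\<bar>}) \<longlonglongrightarrow> 0)"

definition conv_in_distr2 ::
  "(nat \<Rightarrow> 'a measure) \<Rightarrow> (nat \<Rightarrow> 'a \<Rightarrow> real \<times> real) \<Rightarrow> (real \<times> real) measure \<Rightarrow> bool" where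
  "conv_in_distr2 M Z L \<longleftrightarrow>
     (\<forall>f :: real \<times> real \<Rightarrow> real. continuous_on UNIV f \<and> bounded (range f) \<longrightarrow>
        (\<lambda>n. \<integral>x. f (Z n x) \<partial>(M n)) \<longlonglongrightarrow> (\<integral>z. f z \<partial>L))"

definition quad2 :: "real \<Rightarrow> real \<Rightarrow> real \<Rightarrow> real \<Rightarrow> real \<Rightarrow> real" where
  "quad2 S11 S12 S22 a b = a\<^sup>2 * S11 + 2 * a * b * S12 + b\<^sup>2 * S22"

definition normal_law :: "real \<Rightarrow> real measure" where
  "normal_law v = (if v = 0 then return borel 0 else density lborel (normal_density 0 (sqrt v)))"

definition bivariate_normal :: "real \<Rightarrow> real \<Rightarrow> real \<Rightarrow> (real \<times> real) measure \<Rightarrow> bool" where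
  "bivariate_normal S11 S12 S22 L \<longleftrightarrow>
     prob_space L \<and> sets L = sets borel \<and>
     (\<forall>a b. 0 \<le> quad2 S11 S12 S22 a b \<and>
        distr L borel (\<lambda>z. a * fst z + b * snd z) = normal_law (quad2 S11 S12 S22 a b))"

definition comb_weight :: "real \<Rightarrow> real \<Rightarrow> real \<Rightarrow> real" where
  "comb_weight s11 s12 s22 = (s22 - s12) / (s11 + s22 - 2 * s12)"

end

theory Submission
  imports Defs
begin

definition cip :: "(nat \<Rightarrow> 'a measure) \<Rightarrow> (nat \<Rightarrow> 'a \<Rightarrow> 'b::metric_space) \<Rightarrow> 'b \<Rightarrow> bool" where
  "cip M X c \<longleftrightarrow> (\<forall>n. X n \<in> borel_measurable (M n)) \<and>
     (\<forall>e>0. (\<lambda>n. measure (M n) {x \<in> space (M n). e < dist (X n x) c}) \<longlonglongrightarrow> 0)"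

lemma cip_real:
  assumes "conv_in_prob M X c" "\<And>n. X n \<in> borel_measurable (M n)"
  shows "cip M X c"
  using assms unfolding cip_def conv_in_prob_def by (simp add: dist_real_def)

lemma cip_pair:
  assumes prob: "\<And>n. prob_space (M n)"
    and X: "cip M X c" and Y: "cip M Y d"
  shows "cip M (\<lambda>n x. (X n x, Y n x)) (c::'b::{metric_space,second_countable_topology}, d::'c::{metric_space,second_countable_topology})"
  unfolding cip_def
proof safe
  fix n
  have [measurable]: "X n \<in> borel_measurable (M n)" "Y n \<in> borel_measurable (M n)"
    using X Y by (auto simp: cip_def)
  show "(\<lambda>x. (X n x, Y n x)) \<in> borel_measurable (M n)" by measurable
next
  fix e :: real assume e: "0 < e"
  have mX[measurable]: "\<And>n. X n \<in> borel_measurable (M n)" and mY[measurable]: "\<And>n. Y n \<in> borel_measurable (M n)"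
    using X Y by (auto simp: cip_def)
  have "e/2 > 0" using e by simp
  have tX: "(\<lambda>n. measure (M n) {x \<in> space (M n). e/2 < dist (X n x) c}) \<longlonglongrightarrow> 0"
    using X \<open>e/2>0\<close> unfolding cip_def by blast
  have tY: "(\<lambda>n. measure (M n) {x \<in> space (M n). e/2 < dist (Y n x) d}) \<longlonglongrightarrow> 0"
    using Y \<open>e/2>0\<close> unfolding cip_def by blast
  show "(\<lambda>n. measure (M n) {x \<in> space (M n). e < dist (X n x, Y n x) (c, d)}) \<longlonglongrightarrow> 0"
  proof (rule tendsto_sandwich[OF _ _ tendsto_const tendsto_add_zero[OF tX tY]])
    show "\<forall>\<^sub>F n in sequentially. 0 \<le> measure (M n) {x \<in> space (M n). e < dist (X n x, Y n x) (c, d)}"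
      by simp
    show "\<forall>\<^sub>F n in sequentially. measure (M n) {x \<in> space (M n). e < dist (X n x, Y n x) (c, d)}
       \<le> measure (M n) {x \<in> space (M n). e/2 < dist (X n x) c} + measure (M n) {x \<in> space (M n). e/2 < dist (Y n x) d}"
    proof (intro always_eventually allI)
      fix n
      interpret prob_space "M n" by (rule prob)
      have sub: "{x \<in> space (M n). e < dist (X n x, Y n x) (c, d)} \<subseteq>
          {x \<in> space (M n). e/2 < dist (X n x) c} \<union> {x \<in> space (M n). e/2 < dist (Y n x) d}"
      proof
        fix x assume "x \<in> {x \<in> space (M n). e < dist (X n x, Y n x) (c, d)}"
        then have x: "x \<in> space (M n)" "e < dist (X n x, Y n x) (c, d)" by auto
        moreover have "dist (X n x, Y n x) (c, d) \<le> dist (X n x) c + dist (Y n x) d"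
          unfolding dist_Pair_Pair
          by (rule real_le_lsqrt) (auto simp: power2_eq_square algebra_simps)
        ultimately show "x \<in> {x \<in> space (M n). e/2 < dist (X n x) c} \<union> {x \<in> space (M n). e/2 < dist (Y n x) d}"
          by auto
      qed
      have "measure (M n) {x \<in> space (M n). e < dist (X n x, Y n x) (c, d)} \<le>
          measure (M n) ({x \<in> space (M n). e/2 < dist (X n x) c} \<union> {x \<in> space (M n). e/2 < dist (Y n x) d})"
        by (rule finite_measure_mono[OF sub]) measurable
      also have "\<dots> \<le> measure (M n) {x \<in> space (M n). e/2 < dist (X n x) c} + measure (M n) {x \<in> space (M n). e/2 < dist (Y n x) d}"
        by (rule measure_Un_le) measurable
      finally show "measure (M n) {x \<in> space (M n). e < dist (X n x, Y n x) (c, d)}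
       \<le> measure (M n) {x \<in> space (M n). e/2 < dist (X n x) c} + measure (M n) {x \<in> space (M n). e/2 < dist (Y n x) d}" .
    qed
  qed
qed

lemma cip_cont:
  assumes prob: "\<And>n. prob_space (M n)"
    and X: "cip M X (c::'b::{metric_space,second_countable_topology})" and f: "isCont f c"
    and fm: "\<And>n. (\<lambda>x. f (X n x)) \<in> borel_measurable (M n)"
  shows "cip M (\<lambda>n x. f (X n x)) (f c)"
  unfolding cip_def
proof safe
  fix n show "(\<lambda>x. f (X n x)) \<in> borel_measurable (M n)" by (rule fm)
next
  fix e :: real assume e: "0 < e"
  have mX[measurable]: "\<And>n. X n \<in> borel_measurable (M n)"
    using X by (auto simp: cip_def)
  note fm[measurable]
  obtain d where d: "d > 0" "\<And>y. dist y c < d \<Longrightarrow> dist (f y) (f c) < e"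
    using f e unfolding continuous_at_eps_delta by blast
  have "d/2 > 0" using d by simp
  then have tX: "(\<lambda>n. measure (M n) {x \<in> space (M n). d/2 < dist (X n x) c}) \<longlonglongrightarrow> 0"
    using X unfolding cip_def by blast
  show "(\<lambda>n. measure (M n) {x \<in> space (M n). e < dist (f (X n x)) (f c)}) \<longlonglongrightarrow> 0"
  proof (rule tendsto_sandwich[OF _ _ tendsto_const tX])
    show "\<forall>\<^sub>F n in sequentially. 0 \<le> measure (M n) {x \<in> space (M n). e < dist (f (X n x)) (f c)}"
      by simp
    show "\<forall>\<^sub>F n in sequentially. measure (M n) {x \<in> space (M n). e < dist (f (X n x)) (f c)}
       \<le> measure (M n) {x \<in> space (M n). d/2 < dist (X n x) c}"
    proof (intro always_eventually allI)
      fix n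
      interpret prob_space "M n" by (rule prob)
      have sub: "{x \<in> space (M n). e < dist (f (X n x)) (f c)} \<subseteq> {x \<in> space (M n). d/2 < dist (X n x) c}"
      proof clarify
        fix x assume "x \<in> space (M n)" "e < dist (f (X n x)) (f c)"
        then have "\<not> dist (X n x) c < d" using d(2) by force
        then show "d/2 < dist (X n x) c" using d(1) by simp
      qed
      show "measure (M n) {x \<in> space (M n). e < dist (f (X n x)) (f c)}
       \<le> measure (M n) {x \<in> space (M n). d/2 < dist (X n x) c}"
        by (rule finite_measure_mono[OF sub]) measurable
    qed
  qed
qed


lemma tight2:
  assumes prob: "\<And>n. prob_space (M n)"
    and m1[measurable]: "\<And>n. Z1 n \<in> borel_measurable (M n)"
    and m2[measurable]: "\<And>n. Z2 n \<in> borel_measurable (M n)"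
    and L: "prob_space L" "sets L = sets borel"
    and conv: "conv_in_distr2 M (\<lambda>n x. (Z1 n x, Z2 n x)) L"
    and eps: "(0::real) < \<epsilon>"
  shows "\<exists>R. \<forall>\<^sub>F n in sequentially. measure (M n) {x \<in> space (M n). R < \<bar>Z1 n x\<bar> + \<bar>Z2 n x\<bar>} < \<epsilon>"
proof -
  interpret L: prob_space L by (rule L(1))
  have spL: "space L = UNIV" using sets_eq_imp_space_eq[OF L(2)] by simp
  have mL: "f \<in> borel_measurable L" if "f \<in> borel_measurable borel" for f :: "real \<times> real \<Rightarrow> real"
    using that by (simp add: measurable_cong_sets[OF L(2) refl])
  define T where "T z = \<bar>fst z\<bar> + \<bar>snd z\<bar>" for z :: "real \<times> real"
  have Tm: "T \<in> borel_measurable L" by (rule mL, rule borel_measurable_continuous_onI) (unfold T_def, intro continuous_intros)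
  define A where "A k = {z \<in> space L. real k < T z}" for k :: nat
  have As: "range A \<subseteq> sets L"
    using Tm by (auto simp: A_def)
  have Adec: "decseq A"
    by (auto simp: decseq_def A_def)
  have Aint: "(\<Inter>k. A k) = {}"
  proof safe
    fix z assume "z \<in> (\<Inter>k. A k)"
    then have "\<And>k. real k < T z" by (auto simp: A_def)
    moreover obtain k where "T z < real k" using reals_Archimedean2 by blast
    ultimately show "z \<in> {}" by (meson less_asym)
  qed
  have "(\<lambda>k. measure L (A k)) \<longlonglongrightarrow> 0"
    using L.finite_Lim_measure_decseq[OF As Adec] Aint by simp
  then have "\<forall>\<^sub>F k in sequentially. measure L (A k) < \<epsilon>"
    using eps by (rule order_tendstoD(2))
  then obtain k where k: "measure L (A k) < \<epsilon>"
    by (meson eventually_sequentially order_refl)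
  define h where "h z = min 1 (max 0 (T z - real k))" for z
  have hc: "continuous_on UNIV h"
    unfolding h_def T_def by (intro continuous_intros)
  have hb: "bounded (range h)"
    unfolding bounded_iff by (rule exI[of _ 1]) (auto simp: h_def)
  have hm: "h \<in> borel_measurable borel"
    using hc by (rule borel_measurable_continuous_onI)
  have lim: "(\<lambda>n. \<integral>x. h (Z1 n x, Z2 n x) \<partial>M n) \<longlonglongrightarrow> (\<integral>z. h z \<partial>L)"
    using conv hc hb unfolding conv_in_distr2_def by blast
  have "(\<integral>z. h z \<partial>L) \<le> (\<integral>z. indicator (A k) z \<partial>L)"
  proof (rule integral_mono)
    show "integrable L h"
      by (rule L.integrable_const_bound[of _ 1]) (auto simp: h_def intro: mL hm)
    show "integrable L (indicator (A k) :: _ \<Rightarrow> real)"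
      using As by (intro integrable_real_indicator) (auto simp: L.emeasure_eq_measure)
    show "h z \<le> indicator (A k) z" if "z \<in> space L" for z
      using that by (auto simp: h_def A_def indicator_def)
  qed
  also have "\<dots> = measure L (A k)"
    using As by simp
  finally have "(\<integral>z. h z \<partial>L) < \<epsilon>" using k by simp
  then have ev: "\<forall>\<^sub>F n in sequentially. (\<integral>x. h (Z1 n x, Z2 n x) \<partial>M n) < \<epsilon>"
    using lim by (rule order_tendstoD(2)[rotated])
  show ?thesis
  proof (intro exI[of _ "real k + 1"], rule eventually_mono[OF ev])
    fix n assume n: "(\<integral>x. h (Z1 n x, Z2 n x) \<partial>M n) < \<epsilon>"
    interpret prob_space "M n" by (rule prob)
    define B where "B = {x \<in> space (M n). real k + 1 < \<bar>Z1 n x\<bar> + \<bar>Z2 n x\<bar>}"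
    have Bs: "B \<in> sets (M n)" unfolding B_def by measurable
    have "measure (M n) B = (\<integral>x. indicator B x \<partial>M n)"
      using Bs by simp
    also have "\<dots> \<le> (\<integral>x. h (Z1 n x, Z2 n x) \<partial>M n)"
    proof (rule integral_mono)
      show "integrable (M n) (\<lambda>x. h (Z1 n x, Z2 n x))"
      proof (rule integrable_const_bound[of _ 1])
        show "(\<lambda>x. h (Z1 n x, Z2 n x)) \<in> borel_measurable (M n)"
          by (rule measurable_compose[OF _ hm]) measurable
      qed (auto simp: h_def)
      show "integrable (M n) (indicator B :: _ \<Rightarrow> real)"
        using Bs by (intro integrable_real_indicator) (auto simp: emeasure_eq_measure)
      show "indicator B x \<le> h (Z1 n x, Z2 n x)" if "x \<in> space (M n)" for x
        using that by (auto simp: h_def B_def T_def indicator_def)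
    qed
    finally show "measure (M n) {x \<in> space (M n). real k + 1 < \<bar>Z1 n x\<bar> + \<bar>Z2 n x\<bar>} < \<epsilon>"
      using n unfolding B_def by simp
  qed
qed


lemma slutsky2:
  fixes A B :: "nat \<Rightarrow> 'a \<Rightarrow> real" and g :: "real \<Rightarrow> real"
  assumes prob: "\<And>n. prob_space (M n)"
    and m1[measurable]: "\<And>n. Z1 n \<in> borel_measurable (M n)"
    and m2[measurable]: "\<And>n. Z2 n \<in> borel_measurable (M n)"
    and L: "prob_space L" "sets L = sets borel"
    and conv: "conv_in_distr2 M (\<lambda>n x. (Z1 n x, Z2 n x)) L"
    and A: "cip M A a" and B: "cip M B b"
    and gc: "continuous_on UNIV g" and gb: "\<And>x. \<bar>g x\<bar> \<le> 1"
    and gl: "\<And>x y. \<bar>g x - g y\<bar> \<le> K * \<bar>x - y\<bar>" and K: "0 < K"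
  shows "(\<lambda>n. \<integral>x. g (A n x * Z1 n x + B n x * Z2 n x) \<partial>M n) \<longlonglongrightarrow> (\<integral>z. g (a * fst z + b * snd z) \<partial>L)"
proof -
  have gm[measurable]: "g \<in> borel_measurable borel"
    using gc by (rule borel_measurable_continuous_onI)
  have mA[measurable]: "\<And>n. A n \<in> borel_measurable (M n)" and mB[measurable]: "\<And>n. B n \<in> borel_measurable (M n)"
    using A B by (auto simp: cip_def)
  have lc: "continuous_on UNIV (\<lambda>z. g (a * fst z + b * snd z))"
    by (rule continuous_on_compose2[OF gc]) (auto intro!: continuous_intros)
  have lb: "bounded (range (\<lambda>z. g (a * fst z + b * snd z)))"
    unfolding bounded_iff using gb by (intro exI[of _ 1]) auto
  have W: "(\<lambda>n. \<integral>x. g (a * Z1 n x + b * Z2 n x) \<partial>M n) \<longlonglongrightarrow> (\<integral>z. g (a * fst z + b * snd z) \<partial>L)"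
    using conv lc lb unfolding conv_in_distr2_def by (auto dest!: spec[of _ "\<lambda>z. g (a * fst z + b * snd z)"])
  have AB: "cip M (\<lambda>n x. (A n x, B n x)) (a, b)"
    by (rule cip_pair[OF prob A B])
  have D: "cip M (\<lambda>n x. (\<lambda>p. \<bar>fst p - a\<bar> + \<bar>snd p - b\<bar>) (A n x, B n x)) ((\<lambda>p. \<bar>fst p - a\<bar> + \<bar>snd p - b\<bar>) (a, b))"
    by (rule cip_cont[OF prob AB]) (auto intro!: continuous_intros)
  then have D: "cip M (\<lambda>n x. \<bar>A n x - a\<bar> + \<bar>B n x - b\<bar>) 0"
    by simp
  have diff: "(\<lambda>n. (\<integral>x. g (A n x * Z1 n x + B n x * Z2 n x) \<partial>M n) - (\<integral>x. g (a * Z1 n x + b * Z2 n x) \<partial>M n)) \<longlonglongrightarrow> 0"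
    unfolding tendsto_iff
  proof (intro allI impI)
    fix \<epsilon> :: real assume e: "0 < \<epsilon>"
    obtain R where R: "\<forall>\<^sub>F n in sequentially. measure (M n) {x \<in> space (M n). R < \<bar>Z1 n x\<bar> + \<bar>Z2 n x\<bar>} < \<epsilon>/8"
      using tight2[OF prob m1 m2 L conv, of "\<epsilon>/8"] e by auto
    define R' where "R' = \<bar>R\<bar> + 1"
    have R': "0 < R'" "R \<le> R'" by (auto simp: R'_def)
    define \<delta> where "\<delta> = \<epsilon> / (4 * K * R')"
    have d: "0 < \<delta>" using e K R' by (simp add: \<delta>_def)
    have dKR: "K * (\<delta> * R') = \<epsilon>/4" using K R' by (simp add: \<delta>_def field_simps)
    have "\<forall>\<^sub>F n in sequentially. measure (M n) {x \<in> space (M n). \<delta> < dist (\<bar>A n x - a\<bar> + \<bar>B n x - b\<bar>) 0} < \<epsilon>/8"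
    proof (rule order_tendstoD(2))
      show "(\<lambda>n. measure (M n) {x \<in> space (M n). \<delta> < dist (\<bar>A n x - a\<bar> + \<bar>B n x - b\<bar>) 0}) \<longlonglongrightarrow> 0"
        using D d unfolding cip_def by blast
    qed (use e in simp)
    then show "\<forall>\<^sub>F n in sequentially. dist ((\<integral>x. g (A n x * Z1 n x + B n x * Z2 n x) \<partial>M n) - (\<integral>x. g (a * Z1 n x + b * Z2 n x) \<partial>M n)) 0 < \<epsilon>"
      using R
    proof eventually_elim
      case (elim n)
      interpret prob_space "M n" by (rule prob)
      define S1 where "S1 = {x \<in> space (M n). R < \<bar>Z1 n x\<bar> + \<bar>Z2 n x\<bar>}"
      define S2 where "S2 = {x \<in> space (M n). \<delta> < dist (\<bar>A n x - a\<bar> + \<bar>B n x - b\<bar>) 0}"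
      have S1[measurable]: "S1 \<in> sets (M n)" unfolding S1_def by measurable
      have S2[measurable]: "S2 \<in> sets (M n)" unfolding S2_def by measurable
      define Y where "Y x = g (A n x * Z1 n x + B n x * Z2 n x)" for x
      define W where "W x = g (a * Z1 n x + b * Z2 n x)" for x
      have [measurable]: "Y \<in> borel_measurable (M n)" unfolding Y_def by measurable
      have [measurable]: "W \<in> borel_measurable (M n)" unfolding W_def by measurable
      have iY: "integrable (M n) Y"
        by (rule integrable_const_bound[of _ 1]) (auto simp: Y_def gb)
      have iW: "integrable (M n) W"
        by (rule integrable_const_bound[of _ 1]) (auto simp: W_def gb)
      have i1: "integrable (M n) (indicator S1 :: _ \<Rightarrow> real)"
        using S1 by (intro integrable_real_indicator) (auto simp: emeasure_eq_measure)
      have i2: "integrable (M n) (indicator S2 :: _ \<Rightarrow> real)"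
        using S2 by (intro integrable_real_indicator) (auto simp: emeasure_eq_measure)
      have pw: "\<bar>Y x - W x\<bar> \<le> \<epsilon>/4 + 2 * indicator S1 x + 2 * indicator S2 x" if x: "x \<in> space (M n)" for x
      proof (cases "x \<in> S1 \<or> x \<in> S2")
        case True
        have "\<bar>Y x - W x\<bar> \<le> 2" using gb[of "A n x * Z1 n x + B n x * Z2 n x"] gb[of "a * Z1 n x + b * Z2 n x"]
          by (simp add: Y_def W_def)
        also have "2 \<le> \<epsilon>/4 + 2 * indicator S1 x + 2 * indicator S2 x"
          using True e by (auto simp: indicator_def)
        finally show ?thesis .
      next
        case False
        then have T: "\<bar>Z1 n x\<bar> + \<bar>Z2 n x\<bar> \<le> R" and Dx: "\<bar>A n x - a\<bar> + \<bar>B n x - b\<bar> \<le> \<delta>"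
          using x by (auto simp: S1_def S2_def)
        have "\<bar>(A n x * Z1 n x + B n x * Z2 n x) - (a * Z1 n x + b * Z2 n x)\<bar>
            = \<bar>(A n x - a) * Z1 n x + (B n x - b) * Z2 n x\<bar>" by (simp add: algebra_simps)
        also have "\<dots> \<le> \<bar>A n x - a\<bar> * \<bar>Z1 n x\<bar> + \<bar>B n x - b\<bar> * \<bar>Z2 n x\<bar>"
          by (metis abs_mult abs_triangle_ineq)
        also have "\<dots> \<le> (\<bar>A n x - a\<bar> + \<bar>B n x - b\<bar>) * (\<bar>Z1 n x\<bar> + \<bar>Z2 n x\<bar>)"
          by (simp add: algebra_simps)
        also have "\<dots> \<le> \<delta> * R'"
          using T Dx R' by (intro mult_mono) auto
        finally have "\<bar>(A n x * Z1 n x + B n x * Z2 n x) - (a * Z1 n x + b * Z2 n x)\<bar> \<le> \<delta> * R'" .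
        then have "\<bar>Y x - W x\<bar> \<le> K * (\<delta> * R')"
          using gl[of "A n x * Z1 n x + B n x * Z2 n x" "a * Z1 n x + b * Z2 n x"] K
          unfolding Y_def W_def by (meson mult_left_mono less_imp_le order_trans)
        then show ?thesis using dKR False by (simp add: indicator_def)
      qed
      have "\<bar>(\<integral>x. Y x \<partial>M n) - (\<integral>x. W x \<partial>M n)\<bar> = \<bar>\<integral>x. Y x - W x \<partial>M n\<bar>"
        using iY iW by simp
      also have "\<dots> \<le> (\<integral>x. \<bar>Y x - W x\<bar> \<partial>M n)"
        using integral_norm_bound[of "M n" "\<lambda>x. Y x - W x"] by simp
      also have "\<dots> \<le> (\<integral>x. \<epsilon>/4 + 2 * indicator S1 x + 2 * indicator S2 x \<partial>M n)"
        using iY iW i1 i2 pw by (intro integral_mono) auto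
      also have "\<dots> = \<epsilon>/4 + 2 * measure (M n) S1 + 2 * measure (M n) S2"
        using i1 i2 by (simp add: prob_space)
      also have "\<dots> < \<epsilon>"
        using elim e unfolding S1_def S2_def by simp
      finally show ?case unfolding Y_def W_def by (simp add: dist_real_def)
    qed
  qed
  from tendsto_add[OF diff W] show ?thesis by simp
qed


lemma cts_step_bound: "\<bar>cts_step a b x\<bar> \<le> 1" if "a < b"
  using that by (auto simp: cts_step_def divide_simps)

lemma cts_step_lip:
  assumes ab: "a < b"
  shows "\<bar>cts_step a b x - cts_step a b y\<bar> \<le> (1 / (b - a)) * \<bar>x - y\<bar>"
  using ab by (auto simp: cts_step_def divide_simps abs_if)

lemma cts_step_cont: "a < b \<Longrightarrow> continuous_on UNIV (cts_step a b)"
  by (rule uniformly_continuous_imp_continuous[OF cts_step_uniformly_continuous])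

lemma real_distribution_normal_law: "0 < q \<Longrightarrow> real_distribution (normal_law q)"
  unfolding normal_law_def real_distribution_def real_distribution_axioms_def
  by (auto intro: prob_space_normal_density)

lemma final_weak:
  fixes A B :: "nat \<Rightarrow> 'a \<Rightarrow> real"
  assumes prob: "\<And>n. prob_space (M n)"
    and m1[measurable]: "\<And>n. Z1 n \<in> borel_measurable (M n)"
    and m2[measurable]: "\<And>n. Z2 n \<in> borel_measurable (M n)"
    and L: "bivariate_normal S11 S12 S22 L"
    and conv: "conv_in_distr2 M (\<lambda>n x. (Z1 n x, Z2 n x)) L"
    and A: "cip M A a" and B: "cip M B b"
    and q: "0 < quad2 S11 S12 S22 a b"
  shows "weak_conv_m (\<lambda>n. distr (M n) borel (\<lambda>x. A n x * Z1 n x + B n x * Z2 n x)) (normal_law (quad2 S11 S12 S22 a b))"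
proof -
  have L1: "prob_space L" "sets L = sets borel" and Ld: "distr L borel (\<lambda>z. a * fst z + b * snd z) = normal_law (quad2 S11 S12 S22 a b)"
    using L unfolding bivariate_normal_def by auto
  have mA[measurable]: "\<And>n. A n \<in> borel_measurable (M n)" and mB[measurable]: "\<And>n. B n \<in> borel_measurable (M n)"
    using A B by (auto simp: cip_def)
  have linm: "(\<lambda>z::real\<times>real. a * fst z + b * snd z) \<in> borel_measurable L"
    by (simp add: measurable_cong_sets[OF L1(2) refl] borel_measurable_continuous_onI continuous_intros)
  show ?thesis
  proof (rule integral_cts_step_conv_imp_weak_conv)
    fix n
    interpret prob_space "M n" by (rule prob)
    show "real_distribution (distr (M n) borel (\<lambda>x. A n x * Z1 n x + B n x * Z2 n x))"
      unfolding real_distribution_def real_distribution_axioms_def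
      by (auto intro!: prob_space_distr)
  next
    show "real_distribution (normal_law (quad2 S11 S12 S22 a b))"
      using q by (rule real_distribution_normal_law)
  next
    fix x y :: real assume xy: "x < y"
    have cm: "cts_step x y \<in> borel_measurable borel"
      by (rule borel_measurable_continuous_onI[OF cts_step_cont[OF xy]])
    have "(\<lambda>n. \<integral>u. cts_step x y (A n u * Z1 n u + B n u * Z2 n u) \<partial>M n) \<longlonglongrightarrow> (\<integral>z. cts_step x y (a * fst z + b * snd z) \<partial>L)"
      using xy
      by (intro slutsky2[OF prob m1 m2 L1 conv A B cts_step_cont cts_step_bound cts_step_lip]) auto
    moreover have "(\<integral>z. cts_step x y (a * fst z + b * snd z) \<partial>L) = integral\<^sup>L (normal_law (quad2 S11 S12 S22 a b)) (cts_step x y)"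
      unfolding Ld[symmetric] using cm linm by (simp add: integral_distr)
    moreover have "\<And>n. integral\<^sup>L (distr (M n) borel (\<lambda>x. A n x * Z1 n x + B n x * Z2 n x)) (cts_step x y)
        = (\<integral>u. cts_step x y (A n u * Z1 n u + B n u * Z2 n u) \<partial>M n)"
      using cm by (simp add: integral_distr)
    ultimately show "(\<lambda>n. integral\<^sup>L (distr (M n) borel (\<lambda>x. A n x * Z1 n x + B n x * Z2 n x)) (cts_step x y))
       \<longlonglongrightarrow> integral\<^sup>L (normal_law (quad2 S11 S12 S22 a b)) (cts_step x y)"
      by simp
  qed
qed


lemma quad2_scale: "quad2 S11 S12 S22 (c * x) (c * y) = c\<^sup>2 * quad2 S11 S12 S22 x y"
  unfolding quad2_def by (simp add: power2_eq_square algebra_simps)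

lemma quad2_line: "quad2 S11 S12 S22 w (1 - w) = (S11 - 2 * S12 + S22) * w\<^sup>2 - 2 * (S22 - S12) * w + S22"
  unfolding quad2_def by (simp add: power2_eq_square algebra_simps)

lemma cw_eq:
  assumes D: "S11 - 2 * S12 + S22 > 0"
  shows "(S11 - 2 * S12 + S22) * comb_weight S11 S12 S22 = S22 - S12"
  using D unfolding comb_weight_def by (simp add: field_simps)

lemma quad2_min:
  assumes D: "S11 - 2 * S12 + S22 > 0"
  shows "quad2 S11 S12 S22 w (1 - w) = (S11 - 2 * S12 + S22) * (w - comb_weight S11 S12 S22)\<^sup>2
      + quad2 S11 S12 S22 (comb_weight S11 S12 S22) (1 - comb_weight S11 S12 S22)"
proof -
  define w0 where "w0 = comb_weight S11 S12 S22"
  define d where "d = S11 - 2 * S12 + S22"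
  have e: "S22 - S12 = d * w0" using cw_eq[OF D] by (simp add: w0_def d_def)
  show ?thesis unfolding quad2_line w0_def[symmetric] d_def[symmetric] e
    by (simp add: power2_eq_square algebra_simps)
qed

lemma quad2_opt:
  assumes D: "S11 - 2 * S12 + S22 > 0"
  shows "quad2 S11 S12 S22 (comb_weight S11 S12 S22) (1 - comb_weight S11 S12 S22) = (S11 * S22 - S12\<^sup>2) / (S11 - 2 * S12 + S22)"
proof -
  define w0 where "w0 = comb_weight S11 S12 S22"
  define d where "d = S11 - 2 * S12 + S22"
  have e: "d * w0 = S22 - S12" using cw_eq[OF D] by (simp add: w0_def d_def)
  have q: "quad2 S11 S12 S22 w0 (1 - w0) = S22 - d * w0\<^sup>2"
    unfolding quad2_line d_def[symmetric] e[symmetric] by (simp add: power2_eq_square algebra_simps)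
  have "d * (S22 - d * w0\<^sup>2) = d * S22 - (d * w0)\<^sup>2" by (simp add: power2_eq_square algebra_simps)
  also have "\<dots> = S11 * S22 - S12\<^sup>2" by (simp only: e) (simp add: d_def power2_eq_square algebra_simps)
  finally have "S22 - d * w0\<^sup>2 = (S11 * S22 - S12\<^sup>2) / d" using D by (simp add: d_def field_simps)
  then show ?thesis using q by (simp add: w0_def d_def)
qed


theorem theorem4p1:
  fixes M :: "nat \<Rightarrow> 'a measure"
    and tadj tunadj Sh11 Sh12 Sh22 :: "nat \<Rightarrow> 'a \<Rightarrow> real"
    and tau S11 S12 S22 :: real
  assumes prob: "\<And>n. prob_space (M n)"
    and meas: "\<And>n. tadj n \<in> borel_measurable (M n)" "\<And>n. tunadj n \<in> borel_measurable (M n)"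
      "\<And>n. Sh11 n \<in> borel_measurable (M n)" "\<And>n. Sh12 n \<in> borel_measurable (M n)"
      "\<And>n. Sh22 n \<in> borel_measurable (M n)"
    and clt: "\<exists>L. bivariate_normal S11 S12 S22 L \<and>
      conv_in_distr2 M (\<lambda>n x. (sqrt (real n) * (tadj n x - tau), sqrt (real n) * (tunadj n x - tau))) L"
    and pos: "S11 - 2 * S12 + S22 > 0"
    and nondeg: "S11 * S22 - S12\<^sup>2 > 0"
    and cons: "conv_in_prob M Sh11 S11" "conv_in_prob M Sh12 S12" "conv_in_prob M Sh22 S22"
  shows "weak_conv_m
           (\<lambda>n. distr (M n) borel
              (\<lambda>x. let w = comb_weight (Sh11 n x) (Sh12 n x) (Sh22 n x);
                       tstar = w * tadj n x + (1 - w) * tunadj n x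
                   in sqrt (real n) * inverse (sqrt (quad2 (Sh11 n x) (Sh12 n x) (Sh22 n x) w (1 - w)))
                        * (tstar - tau)))
           std_normal_distribution
       \<and> (let V = (INF w. quad2 S11 S12 S22 w (1 - w)) in
           weak_conv_m
             (\<lambda>n. distr (M n) borel
                (\<lambda>x. let w = comb_weight (Sh11 n x) (Sh12 n x) (Sh22 n x);
                         tstar = w * tadj n x + (1 - w) * tunadj n x
                     in sqrt (real n) * (tstar - tau)))
             (normal_law V)
           \<and> V \<le> S11 \<and> V \<le> S22)"
proof -
  obtain L where L: "bivariate_normal S11 S12 S22 L"
    and conv0: "conv_in_distr2 M (\<lambda>n x. (sqrt (real n) * (tadj n x - tau), sqrt (real n) * (tunadj n x - tau))) L"
    using clt by blast
  define Z1 where "Z1 = (\<lambda>n x. sqrt (real n) * (tadj n x - tau))"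
  define Z2 where "Z2 = (\<lambda>n x. sqrt (real n) * (tunadj n x - tau))"
  have conv: "conv_in_distr2 M (\<lambda>n x. (Z1 n x, Z2 n x)) L"
    using conv0 by (simp add: Z1_def Z2_def)
  note meas[measurable]
  have m1[measurable]: "\<And>n. Z1 n \<in> borel_measurable (M n)" unfolding Z1_def by measurable
  have m2[measurable]: "\<And>n. Z2 n \<in> borel_measurable (M n)" unfolding Z2_def by measurable
  have T: "cip M (\<lambda>n x. (Sh11 n x, (Sh12 n x, Sh22 n x))) (S11, (S12, S22))"
    by (intro cip_pair prob cip_real cons meas)
  define cw where "cw p = comb_weight (fst p) (fst (snd p)) (snd (snd p))" for p :: "real \<times> real \<times> real"
  define qf where "qf p = quad2 (fst p) (fst (snd p)) (snd (snd p)) (cw p) (1 - cw p)" for p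
  define c where "c = (S11, (S12, S22))"
  define w0 where "w0 = comb_weight S11 S12 S22"
  define V0 where "V0 = quad2 S11 S12 S22 w0 (1 - w0)"
  have den: "S11 + S22 - 2 * S12 \<noteq> 0" using pos by simp
  have V0pos: "0 < V0"
    unfolding V0_def w0_def quad2_opt[OF pos] using pos nondeg by simp
  have cwc: "cw c = w0" by (simp add: cw_def c_def w0_def)
  have qfc: "qf c = V0" by (simp add: qf_def cwc V0_def) (simp add: c_def)
  have cwcont: "isCont cw c"
    unfolding cw_def comb_weight_def c_def using den by (intro continuous_intros) auto
  have qfcont: "isCont qf c"
    unfolding qf_def quad2_def by (intro continuous_intros cwcont)
  have cwm: "\<And>n. (\<lambda>x. cw (Sh11 n x, Sh12 n x, Sh22 n x)) \<in> borel_measurable (M n)"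
    unfolding cw_def comb_weight_def by measurable
  have qfm: "\<And>n. (\<lambda>x. qf (Sh11 n x, Sh12 n x, Sh22 n x)) \<in> borel_measurable (M n)"
    unfolding qf_def quad2_def using cwm by measurable
  have V: "(INF w. quad2 S11 S12 S22 w (1 - w)) = V0"
    unfolding V0_def
  proof (rule cInf_eq_minimum)
    show "quad2 S11 S12 S22 w0 (1 - w0) \<in> range (\<lambda>w. quad2 S11 S12 S22 w (1 - w))" by simp
    fix x assume "x \<in> range (\<lambda>w. quad2 S11 S12 S22 w (1 - w))"
    then obtain w where x: "x = quad2 S11 S12 S22 w (1 - w)" by auto
    show "quad2 S11 S12 S22 w0 (1 - w0) \<le> x"
      unfolding x quad2_min[OF pos, of w] w0_def using pos by simp
  qed
  have VS: "V0 \<le> quad2 S11 S12 S22 w (1 - w)" for w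
  proof -
    have "0 \<le> (S11 - 2 * S12 + S22) * (w - w0)\<^sup>2" using pos by simp
    then show ?thesis using quad2_min[OF pos, of w] unfolding V0_def w0_def by linarith
  qed
  have VS11: "V0 \<le> S11" using VS[of 1] by (simp add: quad2_def)
  have VS22: "V0 \<le> S22" using VS[of 0] by (simp add: quad2_def)
  have A2: "cip M (\<lambda>n x. cw (Sh11 n x, Sh12 n x, Sh22 n x)) w0"
    using cip_cont[OF prob T[folded c_def] cwcont] cwm cwc by (simp add: c_def)
  have B2: "cip M (\<lambda>n x. 1 - cw (Sh11 n x, Sh12 n x, Sh22 n x)) (1 - w0)"
    using cip_cont[OF prob T[folded c_def], of "\<lambda>p. 1 - cw p"] cwcont cwm cwc
    by (simp add: c_def continuous_intros)
  have W2: "weak_conv_m (\<lambda>n. distr (M n) borel (\<lambda>x. cw (Sh11 n x, Sh12 n x, Sh22 n x) * Z1 n x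
        + (1 - cw (Sh11 n x, Sh12 n x, Sh22 n x)) * Z2 n x)) (normal_law (quad2 S11 S12 S22 w0 (1 - w0)))"
    by (rule final_weak[OF prob m1 m2 L conv A2 B2]) (use V0pos in \<open>simp add: V0_def\<close>)
  have eq2: "(\<lambda>x. let w = comb_weight (Sh11 n x) (Sh12 n x) (Sh22 n x);
                         tstar = w * tadj n x + (1 - w) * tunadj n x
                     in sqrt (real n) * (tstar - tau))
      = (\<lambda>x. cw (Sh11 n x, Sh12 n x, Sh22 n x) * Z1 n x + (1 - cw (Sh11 n x, Sh12 n x, Sh22 n x)) * Z2 n x)" for n
    by (rule ext) (simp add: Let_def cw_def Z1_def Z2_def algebra_simps)
  define s0 where "s0 = inverse (sqrt V0)"
  have scont: "isCont (\<lambda>p. inverse (sqrt (qf p))) c"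
    using V0pos qfc by (intro continuous_intros qfcont) auto
  have A1: "cip M (\<lambda>n x. inverse (sqrt (qf (Sh11 n x, Sh12 n x, Sh22 n x))) * cw (Sh11 n x, Sh12 n x, Sh22 n x)) (s0 * w0)"
    using cip_cont[OF prob T[folded c_def], of "\<lambda>p. inverse (sqrt (qf p)) * cw p"] scont cwcont cwm qfm cwc qfc
    by (simp add: c_def s0_def continuous_intros)
  have B1: "cip M (\<lambda>n x. inverse (sqrt (qf (Sh11 n x, Sh12 n x, Sh22 n x))) * (1 - cw (Sh11 n x, Sh12 n x, Sh22 n x))) (s0 * (1 - w0))"
    using cip_cont[OF prob T[folded c_def], of "\<lambda>p. inverse (sqrt (qf p)) * (1 - cw p)"] scont cwcont cwm qfm cwc qfc
    by (simp add: c_def s0_def continuous_intros)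
  have q1: "quad2 S11 S12 S22 (s0 * w0) (s0 * (1 - w0)) = 1"
    unfolding quad2_scale V0_def[symmetric] s0_def using V0pos by (simp add: power_inverse)
  have W1: "weak_conv_m (\<lambda>n. distr (M n) borel (\<lambda>x. inverse (sqrt (qf (Sh11 n x, Sh12 n x, Sh22 n x))) * cw (Sh11 n x, Sh12 n x, Sh22 n x) * Z1 n x
        + inverse (sqrt (qf (Sh11 n x, Sh12 n x, Sh22 n x))) * (1 - cw (Sh11 n x, Sh12 n x, Sh22 n x)) * Z2 n x)) (normal_law 1)"
    using final_weak[OF prob m1 m2 L conv A1 B1] q1 by simp
  have eq1: "(\<lambda>x. let w = comb_weight (Sh11 n x) (Sh12 n x) (Sh22 n x);
                       tstar = w * tadj n x + (1 - w) * tunadj n x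
                   in sqrt (real n) * inverse (sqrt (quad2 (Sh11 n x) (Sh12 n x) (Sh22 n x) w (1 - w)))
                        * (tstar - tau))
      = (\<lambda>x. inverse (sqrt (qf (Sh11 n x, Sh12 n x, Sh22 n x))) * cw (Sh11 n x, Sh12 n x, Sh22 n x) * Z1 n x
        + inverse (sqrt (qf (Sh11 n x, Sh12 n x, Sh22 n x))) * (1 - cw (Sh11 n x, Sh12 n x, Sh22 n x)) * Z2 n x)" for n
    by (rule ext) (simp add: Let_def qf_def cw_def Z1_def Z2_def algebra_simps)
  have nl1: "normal_law 1 = std_normal_distribution"
    by (simp add: normal_law_def)
  show ?thesis
    unfolding V Let_def eq1[unfolded Let_def] eq2[unfolded Let_def]
    using W1 W2 VS11 VS22 nl1 by (simp add: V0_def)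
qed

end
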